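(* Let $R$ be the ring of upper triangular $2\times 2$ matrices over the field $\mathbb{F}_2$ (a non-commutative ring with unity of order $8$ having exactly $6$ zero-divisors, counting $0$). Consider the (left) projective line $P(R)$. Then: (i) $P(R)$ has exactly $18$ points; (ii) exactly $14$ of these points have a representative pair $(a,b)$ in which $a$ or $b$ is a unit of $R$; (iii) every point of $P(R)$ has exactly $9$ neighbours other than itself; (iv) any two distant points of $P(R)$ have exactly $4$ common neighbours; (v) any three pairwise distant points of $P(R)$ have no common neighbour; (vi) the maximum cardinality of a set of pairwise distant points of $P(R)$ is $3$. *)

theory Defs
  imports Main "HOL-Library.Z2"
begin

text \<open>The ring R of upper triangular 2x2 matrices over the field F_2 (type bit).
  An element (a, b, c) represents the matrix [[a, b], [0, c]].\<close>

type_synonym ut = "bit \<times> bit \<times> bit"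

definition ut_zero :: ut where "ut_zero = (0, 0, 0)"
definition ut_one :: ut where "ut_one = (1, 0, 1)"

fun ut_add :: "ut \<Rightarrow> ut \<Rightarrow> ut" where
  "ut_add (a, b, c) (a', b', c') = (a + a', b + b', c + c')"

fun ut_mul :: "ut \<Rightarrow> ut \<Rightarrow> ut" where
  "ut_mul (a, b, c) (a', b', c') = (a * a', a * b' + b * c', c * c')"

definition ut_unit :: "ut \<Rightarrow> bool" where
  "ut_unit x \<longleftrightarrow> (\<exists>y. ut_mul x y = ut_one \<and> ut_mul y x = ut_one)"

text \<open>2x2 matrices over R, written row-wise as (a, b, c, d) = [[a, b], [c, d]].\<close>

type_synonym mat2 = "ut \<times> ut \<times> ut \<times> ut"

fun mat2_mul :: "mat2 \<Rightarrow> mat2 \<Rightarrow> mat2" where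
  "mat2_mul (a, b, c, d) (e, f, g, h) =
     (ut_add (ut_mul a e) (ut_mul b g), ut_add (ut_mul a f) (ut_mul b h),
      ut_add (ut_mul c e) (ut_mul d g), ut_add (ut_mul c f) (ut_mul d h))"

definition mat2_one :: mat2 where "mat2_one = (ut_one, ut_zero, ut_zero, ut_one)"

definition GL2 :: "mat2 \<Rightarrow> bool" where
  "GL2 M \<longleftrightarrow> (\<exists>N. mat2_mul M N = mat2_one \<and> mat2_mul N M = mat2_one)"

definition admissible :: "ut \<times> ut \<Rightarrow> bool" where
  "admissible p \<longleftrightarrow> (\<exists>c d. GL2 (fst p, snd p, c, d))"

definition cyc :: "ut \<times> ut \<Rightarrow> (ut \<times> ut) set" where
  "cyc p = {(ut_mul r (fst p), ut_mul r (snd p)) | r. True}"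

definition PR :: "(ut \<times> ut) set set" where
  "PR = {cyc p | p. admissible p}"

text \<open>Distant points: R(a,b) and R(c,d) with [[a,b],[c,d]] in GL_2(R).
  Points are neighbours iff they are not distant.\<close>
definition distant :: "(ut \<times> ut) set \<Rightarrow> (ut \<times> ut) set \<Rightarrow> bool" where
  "distant P Q \<longleftrightarrow> (\<exists>a b c d. P = cyc (a, b) \<and> Q = cyc (c, d) \<and> GL2 (a, b, c, d))"

end

theory Submission
  imports Defs
begin


lemma ex_bit: "(\<exists>x::bit. P x) \<longleftrightarrow> P 0 \<or> P 1"
  by (metis bit.exhaust)
lemma all_bit: "(\<forall>x::bit. P x) \<longleftrightarrow> P 0 \<and> P 1"
  by (metis bit.exhaust)

lemma bit_add_self[simp]: "(x::bit) + x = 0" by (cases x) simp_all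

definition kx :: "ut \<times> ut \<Rightarrow> bit \<times> bit" where
  "kx p = (fst (fst p), fst (snd p))"
definition ky :: "ut \<times> ut \<Rightarrow> bit \<times> bit" where
  "ky p = (snd (snd (fst p)), snd (snd (snd p)))"

fun mat2_add :: "mat2 \<Rightarrow> mat2 \<Rightarrow> mat2" where
  "mat2_add (a, b, c, d) (e, f, g, h) = (ut_add a e, ut_add b f, ut_add c g, ut_add d h)"

definition ginv :: "mat2 \<Rightarrow> mat2" where
  "ginv M = (case M of ((a1,a2,a3),(b1,b2,b3),(c1,c2,c3),(d1,d2,d3)) \<Rightarrow>
     let N' = ((d1,0,d3),(b1,0,b3),(c1,0,c3),(a1,0,a3));
         K = ((0,a2,0),(0,b2,0),(0,c2,0),(0,d2,0))
     in mat2_add N' (mat2_mul N' (mat2_mul K N')))"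

lemma eq0: "(x::bit) = 0 \<longleftrightarrow> \<not> x = 1" by simp

lemma GL2_iff: "GL2 ((a1,a2,a3),(b1,b2,b3),(c1,c2,c3),(d1,d2,d3)) \<longleftrightarrow>
   a1*d1 + b1*c1 = 1 \<and> a3*d3 + b3*c3 = 1"
proof
  assume "GL2 ((a1,a2,a3),(b1,b2,b3),(c1,c2,c3),(d1,d2,d3))"
  then obtain e1 e2 e3 f1 f2 f3 g1 g2 g3 h1 h2 h3 where
    "mat2_mul ((a1,a2,a3),(b1,b2,b3),(c1,c2,c3),(d1,d2,d3)) ((e1,e2,e3),(f1,f2,f3),(g1,g2,g3),(h1,h2,h3)) = mat2_one"
    unfolding GL2_def by (metis prod.exhaust)
  then have e: "a1*e1+b1*g1 = 1" "a1*f1+b1*h1 = 0" "c1*e1+d1*g1=0" "c1*f1+d1*h1=1"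
     "a3*e3+b3*g3 = 1" "a3*f3+b3*h3 = 0" "c3*e3+d3*g3=0" "c3*f3+d3*h3=1"
    by (simp_all add: mat2_one_def ut_one_def ut_zero_def)
  show "a1*d1 + b1*c1 = 1 \<and> a3*d3 + b3*c3 = 1"
    using e by (cases a1; cases b1; cases c1; cases d1; simp; cases a3; cases b3; cases c3; cases d3; simp)
next
  assume h: "a1*d1 + b1*c1 = 1 \<and> a3*d3 + b3*c3 = 1"
  let ?M = "((a1,a2,a3),(b1,b2,b3),(c1,c2,c3),(d1,d2,d3))"
  have "mat2_mul ?M (ginv ?M) = mat2_one \<and> mat2_mul (ginv ?M) ?M = mat2_one"
    using h unfolding ginv_def mat2_one_def ut_one_def ut_zero_def
    by (cases a1; cases b1; cases c1; cases d1; simp; cases a3; cases b3; cases c3; cases d3; simp;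
        simp only: eq0; argo)
  then show "GL2 ?M" unfolding GL2_def by blast
qed



definition pmul :: "ut \<Rightarrow> ut \<times> ut \<Rightarrow> ut \<times> ut" where
  "pmul r p = (ut_mul r (fst p), ut_mul r (snd p))"

definition u1 :: ut where "u1 = (1,1,1)"

definition kdet :: "bit \<times> bit \<Rightarrow> bit \<times> bit \<Rightarrow> bool" where
  "kdet u v \<longleftrightarrow> fst u * snd v + snd u * fst v = 1"

definition kd :: "ut \<times> ut \<Rightarrow> ut \<times> ut \<Rightarrow> bool" where
  "kd p q \<longleftrightarrow> kx p \<noteq> kx q \<and> ky p \<noteq> ky q"

lemma cyc_range: "cyc p = range (\<lambda>r. pmul r p)"
  unfolding cyc_def pmul_def by auto

lemma GL2_key: "GL2 (a, b, c, d) \<longleftrightarrow> kdet (kx (a,b)) (kx (c,d)) \<and> kdet (ky (a,b)) (ky (c,d))"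
  by (cases a; cases b; cases c; cases d) (simp add: GL2_iff kdet_def kx_def ky_def)

lemma adm_iff: "admissible p \<longleftrightarrow> kx p \<noteq> (0,0) \<and> ky p \<noteq> (0,0)"
proof -
  obtain a1 a2 a3 b1 b2 b3 where p: "p = ((a1,a2,a3),(b1,b2,b3))" by (metis prod.exhaust)
  show ?thesis unfolding p admissible_def
    by (simp add: GL2_key split_paired_Ex ex_bit kdet_def kx_def ky_def;
        cases a1; cases b1; cases a3; cases b3; simp)
qed

lemma kdet_adm: "u \<noteq> (0,0) \<Longrightarrow> v \<noteq> (0,0) \<Longrightarrow> kdet u v \<longleftrightarrow> u \<noteq> v"
proof -
  obtain a b c d where "u = (a,b)" "v = (c,d)" by (metis prod.exhaust)
  then show "u \<noteq> (0,0) \<Longrightarrow> v \<noteq> (0,0) \<Longrightarrow> kdet u v \<longleftrightarrow> u \<noteq> v"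
    by (cases a; cases b; cases c; cases d; simp add: kdet_def)
qed

lemma ut_mul_assoc: "ut_mul r (ut_mul s a) = ut_mul (ut_mul r s) a"
  by (cases r; cases s; cases a) (simp del: add_bit_eq_xor mult_bit_eq_and add: algebra_simps)

lemma pmul_assoc: "pmul r (pmul s p) = pmul (ut_mul r s) p"
  unfolding pmul_def by (simp add: ut_mul_assoc)

lemma pmul_one[simp]: "pmul ut_one p = p"
  unfolding pmul_def ut_one_def by (cases p; cases "fst p"; cases "snd p") simp

lemma u1u1: "ut_mul u1 u1 = ut_one"
  unfolding u1_def ut_one_def by simp

lemma in_cyc_self: "p \<in> cyc p"
  unfolding cyc_range by (metis pmul_one rangeI)

lemma cyc_pmul_sub: "cyc (pmul t p) \<subseteq> cyc p"
proof
  fix z assume "z \<in> cyc (pmul t p)"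
  then obtain r where "z = pmul r (pmul t p)" unfolding cyc_range by blast
  then have "z = pmul (ut_mul r t) p" by (simp add: pmul_assoc)
  then show "z \<in> cyc p" unfolding cyc_range by blast
qed

lemma cyc_u1: "cyc (pmul u1 p) = cyc p"
proof
  show "cyc (pmul u1 p) \<subseteq> cyc p" by (rule cyc_pmul_sub)
  have "cyc p = cyc (pmul u1 (pmul u1 p))" by (simp add: pmul_assoc u1u1)
  also have "\<dots> \<subseteq> cyc (pmul u1 p)" by (rule cyc_pmul_sub)
  finally show "cyc p \<subseteq> cyc (pmul u1 (p))" .
qed

lemma fix_unit:
  assumes "admissible p" "pmul t p = p"
  shows "fst t = 1 \<and> snd (snd t) = 1"
proof -
  obtain a1 a2 a3 b1 b2 b3 where p: "p = ((a1,a2,a3),(b1,b2,b3))" by (metis prod.exhaust)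
  obtain t1 t2 t3 where t: "t = (t1,t2,t3)" by (metis prod.exhaust)
  have h: "t1*a1 = a1" "t1*b1 = b1" "t3*a3 = a3" "t3*b3 = b3"
    using assms(2) unfolding p t pmul_def by simp_all
  have "(a1,b1) \<noteq> (0,0)" "(a3,b3) \<noteq> (0,0)" using assms(1) unfolding adm_iff p kx_def ky_def by auto
  with h show ?thesis unfolding t by (cases t1; cases t3; auto)
qed

lemma cyc_eq_imp:
  assumes "admissible p" "cyc q = cyc p"
  shows "q = p \<or> q = pmul u1 p"
proof -
  have "q \<in> cyc p" using in_cyc_self[of q] assms(2) by simp
  then obtain r where r: "q = pmul r p" unfolding cyc_range by blast
  have "p \<in> cyc q" using in_cyc_self[of p] assms(2) by simp
  then obtain s where s: "p = pmul s q" unfolding cyc_range by blast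
  have "pmul (ut_mul s r) p = p" by (simp only: pmul_assoc[symmetric] r[symmetric] s[symmetric])
  from fix_unit[OF assms(1) this] have "fst (ut_mul s r) = 1 \<and> snd (snd (ut_mul s r)) = 1" .
  moreover obtain r1 r2 r3 where rr: "r = (r1,r2,r3)" by (metis prod.exhaust)
  moreover obtain s1 s2 s3 where ss: "s = (s1,s2,s3)" by (metis prod.exhaust)
  ultimately have "r1 = 1 \<and> r3 = 1" by (cases r1; cases r3; simp)
  then have "r = ut_one \<or> r = u1" unfolding rr ut_one_def u1_def by (cases r2; simp)
  then show ?thesis using r by auto
qed

lemma kx_u1[simp]: "kx (pmul u1 p) = kx p" and ky_u1[simp]: "ky (pmul u1 p) = ky p"
  unfolding kx_def ky_def pmul_def u1_def by (cases p; cases "fst p"; cases "snd p"; simp)+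

lemma distant_iff:
  assumes "admissible p" "admissible q"
  shows "distant (cyc p) (cyc q) \<longleftrightarrow> kd p q"
proof
  assume "distant (cyc p) (cyc q)"
  then obtain a b c d where e: "cyc p = cyc (a, b)" "cyc q = cyc (c, d)" "GL2 (a, b, c, d)"
    unfolding distant_def by blast
  have "kx (a,b) = kx p \<and> ky (a,b) = ky p" using cyc_eq_imp[OF assms(1) e(1)[symmetric]] by auto
  moreover have "kx (c,d) = kx q \<and> ky (c,d) = ky q" using cyc_eq_imp[OF assms(2) e(2)[symmetric]] by auto
  ultimately show "kd p q" using e(3) assms unfolding GL2_key kd_def
    by (metis adm_iff kdet_adm)
next
  assume "kd p q"
  then have "GL2 (fst p, snd p, fst q, snd q)" using assms unfolding GL2_key kd_def
    by (simp add: adm_iff kdet_adm)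
  then show "distant (cyc p) (cyc q)" unfolding distant_def by (metis prod.collapse)
qed

lemma unit_iff: "ut_unit a \<longleftrightarrow> fst a = 1 \<and> snd (snd a) = 1"
proof
  assume "ut_unit a"
  then obtain y where "ut_mul a y = ut_one" unfolding ut_unit_def by blast
  moreover obtain a1 a2 a3 where a: "a = (a1,a2,a3)" by (metis prod.exhaust)
  moreover obtain y1 y2 y3 where y: "y = (y1,y2,y3)" by (metis prod.exhaust)
  ultimately have "a1 * y1 = 1" "a3 * y3 = 1" by (simp_all add: ut_one_def)
  then show "fst a = 1 \<and> snd (snd a) = 1" unfolding a by (cases a1; cases a3; simp)
next
  assume h: "fst a = 1 \<and> snd (snd a) = 1"
  obtain a1 a2 a3 where a: "a = (a1,a2,a3)" by (metis prod.exhaust)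
  have "ut_mul a a = ut_one" using h unfolding a ut_one_def by simp
  then show "ut_unit a" unfolding ut_unit_def by blast
qed



definition pts :: "(ut \<times> ut) list" where
  "pts = [((0,0,0),(1,0,1)), ((0,1,0),(1,0,1)), ((0,0,1),(1,0,0)), ((0,0,1),(1,1,0)), ((0,0,1),(1,0,1)), ((0,1,1),(1,0,1)), ((1,0,0),(0,0,1)), ((1,1,0),(0,0,1)), ((1,0,1),(0,0,0)), ((1,0,1),(0,1,0)), ((1,0,1),(0,0,1)), ((1,1,1),(0,0,1)), ((1,0,0),(1,0,1)), ((1,1,0),(1,0,1)), ((1,0,1),(1,0,0)), ((1,0,1),(1,1,0)), ((1,0,1),(1,0,1)), ((1,1,1),(1,0,1))]"

lemma pts_adm: "p \<in> set pts \<Longrightarrow> admissible p"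
  unfolding pts_def by (auto simp: adm_iff kx_def ky_def)

lemma pts_distinct: "distinct pts"
  unfolding pts_def by simp

lemma cover_all: "\<forall>a1 a2 a3 b1 b2 b3. admissible ((a1,a2,a3),(b1,b2,b3)) \<longrightarrow>
   (\<exists>q\<in>set pts. ((a1,a2,a3),(b1,b2,b3)) = q \<or> ((a1,a2,a3),(b1,b2,b3)) = pmul u1 q)"
  unfolding adm_iff kx_def ky_def pts_def pmul_def u1_def
  by (simp only: all_bit fst_conv snd_conv prod.inject; simp)

lemma cover: "admissible p \<Longrightarrow> \<exists>q\<in>set pts. cyc p = cyc q"
proof -
  assume "admissible p"
  moreover obtain a1 a2 a3 b1 b2 b3 where p: "p = ((a1,a2,a3),(b1,b2,b3))" by (metis prod.exhaust)
  ultimately obtain q where q: "q \<in> set pts" "p = q \<or> p = pmul u1 q"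
    using cover_all[rule_format, of a1 a2 a3 b1 b2 b3] by blast
  from q(2) have "cyc p = cyc q" using cyc_u1[of q] by (elim disjE) simp_all
  with q(1) show ?thesis by blast
qed

lemma PR_eq: "PR = cyc ` set pts"
  unfolding PR_def using cover pts_adm by blast

lemma pts_u1: "\<forall>p\<in>set pts. \<forall>q\<in>set pts. p \<noteq> pmul u1 q"
  unfolding pts_def pmul_def u1_def by simp

lemma cyc_inj_iff: "p \<in> set pts \<Longrightarrow> q \<in> set pts \<Longrightarrow> cyc p = cyc q \<longleftrightarrow> p = q"
  using cyc_eq_imp[OF pts_adm[of q], of p] pts_u1 by blast

lemma inj_cyc: "inj_on cyc (set pts)"
  by (meson cyc_inj_iff inj_onI)

lemma ball_PR: "(\<forall>P\<in>PR. F P) \<longleftrightarrow> (\<forall>p\<in>set pts. F (cyc p))"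
  unfolding PR_eq by simp

lemma card_PR: "card {Q\<in>PR. F Q} = length (filter (\<lambda>q. F (cyc q)) pts)"
proof -
  have "{Q\<in>PR. F Q} = cyc ` {q\<in>set pts. F (cyc q)}" unfolding PR_eq by blast
  moreover have "card (cyc ` {q\<in>set pts. F (cyc q)}) = card {q\<in>set pts. F (cyc q)}"
    by (rule card_image) (rule inj_on_subset[OF inj_cyc], blast)
  moreover have "{q\<in>set pts. F (cyc q)} = set (filter (\<lambda>q. F (cyc q)) pts)" by (rule set_filter[symmetric])
  moreover have "card (set (filter (\<lambda>q. F (cyc q)) pts)) = length (filter (\<lambda>q. F (cyc q)) pts)"
    by (rule distinct_card[OF distinct_filter[OF pts_distinct]])
  ultimately show ?thesis by metis
qed



lemma comp3: "\<forall>p\<in>set pts. length (filter (\<lambda>q. q \<noteq> p \<and> \<not> kd p q) pts) = 9"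
  unfolding pts_def kd_def kx_def ky_def by simp

lemma comp4: "\<forall>p\<in>set pts. \<forall>q\<in>set pts. kd p q \<longrightarrow> length (filter (\<lambda>n. \<not> kd n p \<and> \<not> kd n q) pts) = 4"
  unfolding pts_def kd_def kx_def ky_def by simp



definition U :: "ut \<times> ut \<Rightarrow> bool" where
  "U p \<longleftrightarrow> (fst (kx p) = 1 \<and> fst (ky p) = 1) \<or> (snd (kx p) = 1 \<and> snd (ky p) = 1)"

lemma U_keys: "ut_unit (fst p) \<or> ut_unit (snd p) \<longleftrightarrow> U p"
  unfolding U_def unit_iff kx_def ky_def by simp

lemma unit_cond:
  assumes "admissible p"
  shows "(\<exists>a b. cyc p = cyc (a, b) \<and> (ut_unit a \<or> ut_unit b)) \<longleftrightarrow> U p"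
proof
  assume "\<exists>a b. cyc p = cyc (a, b) \<and> (ut_unit a \<or> ut_unit b)"
  then obtain a b where e: "cyc p = cyc (a, b)" "ut_unit a \<or> ut_unit b" by blast
  have "kx (a,b) = kx p \<and> ky (a,b) = ky p" using cyc_eq_imp[OF assms e(1)[symmetric]] by auto
  moreover have "U (a,b)" using e(2) U_keys[of "(a,b)"] by simp
  ultimately show "U p" unfolding U_def by simp
next
  assume "U p"
  then have "ut_unit (fst p) \<or> ut_unit (snd p)" using U_keys by blast
  then show "\<exists>a b. cyc p = cyc (a, b) \<and> (ut_unit a \<or> ut_unit b)" by (metis prod.collapse)
qed

lemma comp2: "length (filter U pts) = 14"
  unfolding pts_def U_def kx_def ky_def by simp

lemma kx_adm: "admissible p \<Longrightarrow> kx p \<in> {(0,1),(1,0),(1,1)}"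
proof -
  assume "admissible p"
  moreover obtain a b where "kx p = (a,b)" by (metis prod.exhaust)
  ultimately show ?thesis unfolding adm_iff by (cases a; cases b; simp)
qed

lemma distant_pts: "p \<in> set pts \<Longrightarrow> q \<in> set pts \<Longrightarrow> distant (cyc p) (cyc q) \<longleftrightarrow> kd p q"
  by (simp add: distant_iff pts_adm)

theorem mainTheorem3:
  shows "card PR = 18
    \<and> card {P \<in> PR. \<exists>a b. P = cyc (a, b) \<and> (ut_unit a \<or> ut_unit b)} = 14
    \<and> (\<forall>P\<in>PR. card {Q \<in> PR. Q \<noteq> P \<and> \<not> distant P Q} = 9)
    \<and> (\<forall>P\<in>PR. \<forall>Q\<in>PR. distant P Q \<longrightarrow>
           card {N \<in> PR. \<not> distant N P \<and> \<not> distant N Q} = 4)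
    \<and> (\<forall>P\<in>PR. \<forall>Q\<in>PR. \<forall>S\<in>PR. distant P Q \<and> distant P S \<and> distant Q S \<longrightarrow>
           {N \<in> PR. \<not> distant N P \<and> \<not> distant N Q \<and> \<not> distant N S} = {})
    \<and> Max {card T | T. T \<subseteq> PR \<and> pairwise distant T} = 3"
proof (intro conjI)
  have "card {Q\<in>PR. True} = length (filter (\<lambda>q. True) pts)" by (rule card_PR)
  then show "card PR = 18" by (simp add: pts_def)
next
  have "card {P \<in> PR. \<exists>a b. P = cyc (a, b) \<and> (ut_unit a \<or> ut_unit b)}
      = length (filter (\<lambda>q. \<exists>a b. cyc q = cyc (a, b) \<and> (ut_unit a \<or> ut_unit b)) pts)"
    by (rule card_PR)
  also have "filter (\<lambda>q. \<exists>a b. cyc q = cyc (a, b) \<and> (ut_unit a \<or> ut_unit b)) pts = filter U pts"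
    by (rule filter_cong[OF refl]) (metis unit_cond pts_adm)
  finally show "card {P \<in> PR. \<exists>a b. P = cyc (a, b) \<and> (ut_unit a \<or> ut_unit b)} = 14"
    using comp2 by simp
next
  show "\<forall>P\<in>PR. card {Q \<in> PR. Q \<noteq> P \<and> \<not> distant P Q} = 9"
    unfolding ball_PR
  proof
    fix p assume p: "p \<in> set pts"
    have "card {Q \<in> PR. Q \<noteq> cyc p \<and> \<not> distant (cyc p) Q}
       = length (filter (\<lambda>q. cyc q \<noteq> cyc p \<and> \<not> distant (cyc p) (cyc q)) pts)" by (rule card_PR)
    also have "filter (\<lambda>q. cyc q \<noteq> cyc p \<and> \<not> distant (cyc p) (cyc q)) pts
        = filter (\<lambda>q. q \<noteq> p \<and> \<not> kd p q) pts"
      by (rule filter_cong) (use p in \<open>auto simp: distant_pts cyc_inj_iff\<close>)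
    finally show "card {Q \<in> PR. Q \<noteq> cyc p \<and> \<not> distant (cyc p) Q} = 9" using comp3 p by simp
  qed
next
  show "\<forall>P\<in>PR. \<forall>Q\<in>PR. distant P Q \<longrightarrow> card {N \<in> PR. \<not> distant N P \<and> \<not> distant N Q} = 4"
    unfolding ball_PR
  proof (intro ballI impI)
    fix p q assume p: "p \<in> set pts" and q: "q \<in> set pts" and d: "distant (cyc p) (cyc q)"
    have "card {N \<in> PR. \<not> distant N (cyc p) \<and> \<not> distant N (cyc q)}
       = length (filter (\<lambda>n. \<not> distant (cyc n) (cyc p) \<and> \<not> distant (cyc n) (cyc q)) pts)" by (rule card_PR)
    also have "filter (\<lambda>n. \<not> distant (cyc n) (cyc p) \<and> \<not> distant (cyc n) (cyc q)) pts
        = filter (\<lambda>n. \<not> kd n p \<and> \<not> kd n q) pts"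
      by (rule filter_cong) (use p q in \<open>auto simp: distant_pts\<close>)
    finally show "card {N \<in> PR. \<not> distant N (cyc p) \<and> \<not> distant N (cyc q)} = 4"
      using comp4 p q d by (simp add: distant_pts)
  qed
next
  show "\<forall>P\<in>PR. \<forall>Q\<in>PR. \<forall>S\<in>PR. distant P Q \<and> distant P S \<and> distant Q S \<longrightarrow>
           {N \<in> PR. \<not> distant N P \<and> \<not> distant N Q \<and> \<not> distant N S} = {}"
    unfolding ball_PR
  proof (intro ballI impI)
    fix p q s assume p: "p \<in> set pts" and q: "q \<in> set pts" and s: "s \<in> set pts"
      and d: "distant (cyc p) (cyc q) \<and> distant (cyc p) (cyc s) \<and> distant (cyc q) (cyc s)"
    from d have d': "kd p q" "kd p s" "kd q s" using p q s by (simp_all add: distant_pts)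
    show "{N \<in> PR. \<not> distant N (cyc p) \<and> \<not> distant N (cyc q) \<and> \<not> distant N (cyc s)} = {}"
    proof (rule ccontr)
      assume "{N \<in> PR. \<not> distant N (cyc p) \<and> \<not> distant N (cyc q) \<and> \<not> distant N (cyc s)} \<noteq> {}"
      then obtain n where n: "n \<in> set pts" "\<not> distant (cyc n) (cyc p)" "\<not> distant (cyc n) (cyc q)"
        "\<not> distant (cyc n) (cyc s)" unfolding PR_eq by auto
      then have "\<not> kd n p" "\<not> kd n q" "\<not> kd n s" using p q s by (simp_all add: distant_pts)
      with d' show False unfolding kd_def by metis
    qed
  qed
next
  let ?K = "{card T | T. T \<subseteq> PR \<and> pairwise distant T}"
  have le3: "k \<le> 3" if "k \<in> ?K" for k
  proof -
    obtain T where T: "k = card T" "T \<subseteq> PR" "pairwise distant T" using \<open>k \<in> ?K\<close> by blast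
    define T' where "T' = {p \<in> set pts. cyc p \<in> T}"
    have TT: "T = cyc ` T'" using T(2) unfolding T'_def PR_eq by auto
    have inj1: "inj_on cyc T'" by (rule inj_on_subset[OF inj_cyc]) (auto simp: T'_def)
    have inj2: "inj_on kx T'"
    proof (rule inj_onI)
      fix p q assume pq: "p \<in> T'" "q \<in> T'" "kx p = kx q"
      show "p = q"
      proof (rule ccontr)
        assume "p \<noteq> q"
        then have "cyc p \<noteq> cyc q" using pq(1,2) by (simp add: T'_def cyc_inj_iff)
        then have "distant (cyc p) (cyc q)" using T(3) pq(1,2) unfolding T'_def pairwise_def by auto
        then have "kd p q" using pq(1,2) by (simp add: T'_def distant_pts)
        then show False using pq(3) unfolding kd_def by simp
      qed
    qed
    have "kx ` T' \<subseteq> {(0,1),(1,0),(1,1)}"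
    proof (rule image_subsetI)
      fix p assume "p \<in> T'"
      then have "admissible p" using pts_adm unfolding T'_def by blast
      then show "kx p \<in> {(0,1),(1,0),(1,1)}" by (rule kx_adm)
    qed
    then have "card (kx ` T') \<le> card {(0::bit,1::bit),(1,0),(1,1)}" by (rule card_mono[rotated]) simp
    also have "\<dots> = 3" by simp
    finally show ?thesis using T(1) TT card_image[OF inj1] card_image[OF inj2] by simp
  qed
  define p1 :: "ut \<times> ut" where "p1 = ((0,0,0),(1,0,1))"
  define p2 :: "ut \<times> ut" where "p2 = ((1,0,1),(0,0,0))"
  define p3 :: "ut \<times> ut" where "p3 = ((1,0,1),(1,0,1))"
  have ps: "p1 \<in> set pts" "p2 \<in> set pts" "p3 \<in> set pts" by (simp_all add: p1_def p2_def p3_def pts_def)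
  have pw: "\<forall>x\<in>{p1,p2,p3}. \<forall>y\<in>{p1,p2,p3}. x \<noteq> y \<longrightarrow> kd x y"
    by (simp add: kd_def kx_def ky_def p1_def p2_def p3_def)
  have "pairwise distant (cyc ` {p1,p2,p3})"
    unfolding pairwise_def
  proof (intro ballI impI)
    fix P Q assume "P \<in> cyc ` {p1,p2,p3}" "Q \<in> cyc ` {p1,p2,p3}" "P \<noteq> Q"
    then obtain x y where xy: "x \<in> {p1,p2,p3}" "y \<in> {p1,p2,p3}" "P = cyc x" "Q = cyc y" "x \<noteq> y"
      by blast
    have "x \<in> set pts" "y \<in> set pts" using xy(1,2) ps by blast+
    moreover have "kd x y" using pw xy(1,2,5) by blast
    ultimately show "distant P Q" using xy(3,4) by (simp add: distant_pts)
  qed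
  moreover have "card (cyc ` {p1,p2,p3}) = 3"
  proof -
    have "inj_on cyc {p1,p2,p3}" by (rule inj_on_subset[OF inj_cyc]) (use ps in auto)
    then show ?thesis by (simp add: card_image p1_def p2_def p3_def)
  qed
  moreover have "cyc ` {p1,p2,p3} \<subseteq> PR" unfolding PR_eq using ps by auto
  ultimately have "3 \<in> ?K" by (metis (mono_tags, lifting) mem_Collect_eq)
  moreover have "finite ?K" by (rule finite_subset[of _ "{..3}"]) (use le3 in auto)
  ultimately show "Max ?K = 3" using le3 by (intro Max_eqI) auto
qed


end
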